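(* Under the standing setting and assumptions (A1)–(A3) described in the context, fix $X\in\mathcal X$ and assume the set-valued map $\mathcal F:\mathcal X\rightrightarrows\mathcal M$, $\mathcal F(Y)=\{Z\in\mathcal M: Y+Z\in\mathcal A\}$, is lower semicontinuous at $X$. Then $\mathcal R_\varepsilon$ is lower semicontinuous at $X$ for every $\varepsilon>0$.
   Context: Let $\mathcal X$ be a Hausdorff, first countable, locally convex topological vector space over $\mathbb R$, partially ordered by a partial order $\geq$ with positive cone $\mathcal X_+=\{X\in\mathcal X: X\geq 0\}$. Let $\mathcal M\subset\mathcal X$ be a vector subspace with $1<\dim\mathcal M<\infty$, carrying the relative topology, and let $\pi:\mathcal M\to\mathbb R$ be linear. Standing assumptions: (A1) there is $U\in\mathcal M\cap\mathcal X_+$ with $\pi(U)=1$; (A2) $\mathcal A\subsetneq\mathcal X$ is closed, contains $0$, and satisfies $\mathcal A+\mathcal X_+\subset\mathcal A$; (A3) the map $\rho(X)=\inf\{\pi(Z): Z\in\mathcal M,\ X+Z\in\mathcal A\}$ is finitely valued and continuous on $\mathcal X$. For $\varepsilon>0$, $\mathcal R_\varepsilon(X)=\{Z\in\mathcal M: X+Z\in\mathcal A,\ \pi(Z)<\rho(X)+\varepsilon\}$. A set-valued map $\mathcal S:\mathcal X\rightrightarrows\mathcal M$ is lower semicontinuous at $X$ if for every open $\mathcal U\subset\mathcal M$ with $\mathcal S(X)\cap\mathcal U\neq\emptyset$ there is an open neighborhood $\mathcal U_X$ of $X$ with $\mathcal S(Y)\cap\mathcal U\neq\emptyset$ for all $Y\in\mathcal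 U_X$. *)

theory Defs
  imports "HOL-Analysis.Analysis"
begin

definition tvs :: "('a::{real_vector,topological_space}) itself \<Rightarrow> bool" where
  "tvs _ \<longleftrightarrow>
     continuous_on UNIV (\<lambda>p::'a \<times> 'a. fst p + snd p) \<and>
     continuous_on UNIV (\<lambda>p::real \<times> 'a. fst p *\<^sub>R snd p)"

definition locally_convex :: "('a::{real_vector,topological_space}) itself \<Rightarrow> bool" where
  "locally_convex _ \<longleftrightarrow>
     (\<forall>W::'a set. open W \<and> 0 \<in> W \<longrightarrow> (\<exists>C. open C \<and> convex C \<and> 0 \<in> C \<and> C \<subseteq> W))"

definition ordered_vs :: "('a::real_vector \<Rightarrow> 'a \<Rightarrow> bool) \<Rightarrow> bool" where
  "ordered_vs ge \<longleftrightarrow>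
     (\<forall>x. ge x x) \<and> (\<forall>x y. ge x y \<and> ge y x \<longrightarrow> x = y) \<and>
     (\<forall>x y z. ge x y \<and> ge y z \<longrightarrow> ge x z) \<and>
     (\<forall>x y z. ge x y \<longrightarrow> ge (x + z) (y + z)) \<and>
     (\<forall>x y (c::real). ge x y \<and> c \<ge> 0 \<longrightarrow> ge (c *\<^sub>R x) (c *\<^sub>R y))"

definition pos_cone :: "('a::real_vector \<Rightarrow> 'a \<Rightarrow> bool) \<Rightarrow> 'a set" where
  "pos_cone ge = {X. ge X 0}"

definition linear_on_subspace :: "'a::real_vector set \<Rightarrow> ('a \<Rightarrow> real) \<Rightarrow> bool" where
  "linear_on_subspace M p \<longleftrightarrow>
     (\<forall>x\<in>M. \<forall>y\<in>M. p (x + y) = p x + p y) \<and> (\<forall>x\<in>M. \<forall>c. p (c *\<^sub>R x) = c * p x)"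

definition feasible :: "'a::real_vector set \<Rightarrow> 'a set \<Rightarrow> 'a \<Rightarrow> 'a set" where
  "feasible M A Y = {Z \<in> M. Y + Z \<in> A}"

definition rho :: "'a::real_vector set \<Rightarrow> 'a set \<Rightarrow> ('a \<Rightarrow> real) \<Rightarrow> 'a \<Rightarrow> real" where
  "rho M A p X = Inf (p ` feasible M A X)"

definition R_eps :: "'a::real_vector set \<Rightarrow> 'a set \<Rightarrow> ('a \<Rightarrow> real) \<Rightarrow> real \<Rightarrow> 'a \<Rightarrow> 'a set" where
  "R_eps M A p e X = {Z \<in> M. X + Z \<in> A \<and> p Z < rho M A p X + e}"

definition lsc_at :: "'a::{real_vector,topological_space} set \<Rightarrow> ('a \<Rightarrow> 'a set) \<Rightarrow> 'a \<Rightarrow> bool" where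
  "lsc_at M S X \<longleftrightarrow>
     (\<forall>U. openin (top_of_set M) U \<and> S X \<inter> U \<noteq> {} \<longrightarrow>
        (\<exists>V. open V \<and> X \<in> V \<and> (\<forall>Y\<in>V. S Y \<inter> U \<noteq> {})))"

end

theory Submission
  imports Defs
begin

lemma feas_shift:
  assumes M_sub: "subspace M" and p_lin: "linear_on_subspace M p" and Z: "Z \<in> M"
  shows "p ` feasible M A (X - Z) = (\<lambda>r. p Z + r) ` (p ` feasible M A X)"
proof -
  have "feasible M A (X - Z) = (\<lambda>W. Z + W) ` feasible M A X"
  proof (rule set_eqI, rule iffI)
    fix W assume "W \<in> feasible M A (X - Z)"
    then have "W - Z \<in> feasible M A X" "W = Z + (W - Z)"
      using Z M_sub by (auto simp: feasible_def subspace_diff algebra_simps)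
    then show "W \<in> (\<lambda>W. Z + W) ` feasible M A X" by blast
  next
    fix W assume "W \<in> (\<lambda>W. Z + W) ` feasible M A X"
    then show "W \<in> feasible M A (X - Z)"
      using Z M_sub by (auto simp: feasible_def subspace_add algebra_simps)
  qed
  moreover have "\<And>W. W \<in> feasible M A X \<Longrightarrow> p (Z + W) = p Z + p W"
    using p_lin Z by (auto simp: linear_on_subspace_def feasible_def)
  ultimately show ?thesis by (auto simp: image_image image_iff)
qed

lemma rho_shift:
  assumes M_sub: "subspace M" and p_lin: "linear_on_subspace M p" and Z: "Z \<in> M"
    and A3: "\<forall>Y. p ` feasible M A Y \<noteq> {} \<and> bdd_below (p ` feasible M A Y)"
  shows "rho M A p (X - Z) = p Z + rho M A p X"
proof -
  have "rho M A p (X - Z) = (INF r\<in>p ` feasible M A X. p Z + r)"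
    unfolding rho_def feas_shift[OF M_sub p_lin Z] by simp
  also have "\<dots> = p Z + (INF r\<in>p ` feasible M A X. r)"
    using Inf_add_eq[of "\<lambda>r. r" "p ` feasible M A X" "p Z"] A3 by simp
  finally show ?thesis by (simp add: rho_def)
qed

theorem mainTheorem18:
  fixes ge :: "'a::{real_vector,t2_space,first_countable_topology} \<Rightarrow> 'a \<Rightarrow> bool"
    and M A :: "'a set" and p :: "'a \<Rightarrow> real" and X :: 'a
  assumes tvs: "tvs TYPE('a)"
    and lc: "locally_convex TYPE('a)"
    and ord: "ordered_vs ge"
    and M_sub: "subspace M"
    and M_fin: "\<exists>B. finite B \<and> span B = M"
    and M_dim: "1 < dim M"
    and p_lin: "linear_on_subspace M p"
    and A1: "\<exists>U\<in>M \<inter> pos_cone ge. p U = 1"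
    and A2_closed: "closed A" and A2_zero: "0 \<in> A" and A2_proper: "A \<noteq> UNIV"
    and A2_mono: "\<forall>a\<in>A. \<forall>x\<in>pos_cone ge. a + x \<in> A"
    and A3_finite: "\<forall>Y. p ` feasible M A Y \<noteq> {} \<and> bdd_below (p ` feasible M A Y)"
    and A3_cont: "continuous_on UNIV (rho M A p)"
    and F_lsc: "lsc_at M (feasible M A) X"
  shows "\<forall>e>0. lsc_at M (R_eps M A p e) X"
proof (intro allI impI)
  fix e :: real assume e: "e > 0"
  let ?r = "rho M A p"
  have cmul: "continuous_on UNIV (\<lambda>q::real \<times> 'a. fst q *\<^sub>R snd q)"
   and cadd: "continuous_on UNIV (\<lambda>q::'a \<times> 'a. fst q + snd q)"
    using tvs by (auto simp: tvs_def)
  have cneg: "continuous_on UNIV (\<lambda>z::'a. (-1::real) *\<^sub>R z)"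
  proof -
    have "continuous_on UNIV (\<lambda>z::'a. ((-1::real), z))"
      by (intro continuous_intros)
    from continuous_on_compose2[OF cmul this] show ?thesis by simp
  qed
  have cdiff: "continuous_on UNIV (\<lambda>z::'a. X - z)"
  proof -
    have "continuous_on UNIV (\<lambda>z::'a. (X, (-1::real) *\<^sub>R z))"
      by (intro continuous_intros cneg)
    from continuous_on_compose2[OF cadd this] show ?thesis by simp
  qed
  have crz: "continuous_on UNIV (\<lambda>z. ?r (X - z))"
    using continuous_on_compose2[OF A3_cont cdiff] by simp
  show "lsc_at M (R_eps M A p e) X"
    unfolding lsc_at_def
  proof (intro allI impI)
    fix U assume U: "openin (top_of_set M) U \<and> R_eps M A p e X \<inter> U \<noteq> {}"
    then obtain Z0 where Z0: "Z0 \<in> R_eps M A p e X" "Z0 \<in> U" by blast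
    define g where "g = ?r X + e - p Z0"
    have g: "g > 0" using Z0 by (simp add: R_eps_def g_def)
    define W where "W = {z. ?r (X - z) < ?r X + p Z0 + g/2}"
    have Wo: "open W" unfolding W_def
      using open_Collect_less[OF crz continuous_on_const] by simp
    define U' where "U' = U \<inter> (M \<inter> W)"
    have U'o: "openin (top_of_set M) U'" unfolding U'_def
      using U openin_open_Int[OF Wo, of M] openin_Int by blast
    have Z0M: "Z0 \<in> M" using Z0 by (simp add: R_eps_def)
    have "Z0 \<in> W" unfolding W_def
      using rho_shift[OF M_sub p_lin Z0M A3_finite, of X] g by simp
    moreover have "Z0 \<in> feasible M A X" using Z0 by (simp add: R_eps_def feasible_def)
    ultimately have "feasible M A X \<inter> U' \<noteq> {}" using Z0 Z0M by (auto simp: U'_def)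
    then obtain V1 where V1: "open V1" "X \<in> V1" "\<forall>Y\<in>V1. feasible M A Y \<inter> U' \<noteq> {}"
      using F_lsc U'o unfolding lsc_at_def by blast
    define V2 where "V2 = {Y. ?r X - g/2 < ?r Y}"
    have V2o: "open V2" unfolding V2_def
      using open_Collect_less[OF continuous_on_const A3_cont] by simp
    have "X \<in> V2" using g by (simp add: V2_def)
    show "\<exists>V. open V \<and> X \<in> V \<and> (\<forall>Y\<in>V. R_eps M A p e Y \<inter> U \<noteq> {})"
    proof (intro exI conjI ballI)
      show "open (V1 \<inter> V2)" using V1 V2o by auto
      show "X \<in> V1 \<inter> V2" using V1 \<open>X \<in> V2\<close> by auto
      fix Y assume Y: "Y \<in> V1 \<inter> V2"
      then obtain Z where Z: "Z \<in> feasible M A Y" "Z \<in> U'" using V1 by blast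
      have ZM: "Z \<in> M" using Z by (simp add: feasible_def)
      have "?r (X - Z) < ?r X + p Z0 + g/2" using Z by (simp add: U'_def W_def)
      then have "p Z < p Z0 + g/2"
        using rho_shift[OF M_sub p_lin ZM A3_finite, of X] by simp
      moreover have "?r X - g/2 < ?r Y" using Y by (simp add: V2_def)
      ultimately have "p Z < ?r Y + e" by (simp add: g_def field_simps)
      then have "Z \<in> R_eps M A p e Y" using Z by (simp add: R_eps_def feasible_def)
      then show "R_eps M A p e Y \<inter> U \<noteq> {}" using Z by (auto simp: U'_def)
    qed
  qed
qed

end
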